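(* Let $\Gamma$ be a splice diagram satisfying the edge determinant condition and let $T$ be a star-full subtree of $\Gamma$ with set of leaves $L(T)$. Then: (1) the vectors $\{\rho(u):u\in L(T)\}$ are linearly independent; (2) $\Delta_T:=\mathrm{conv}\{\rho(u):u\in L(T)\}$ is a simplex of dimension $|L(T)|-1$; (3) for each node $v$ of $T$, $\rho(v)$ lies in the relative interior of $\Delta_T$.
   Context: A splice diagram is a finite tree $\Gamma$ with at least one vertex of valency $\geq3$ and no vertex of valency $2$; vertices of valency $1$ are leaves, others nodes. For each node $v$ and edge $e$ at $v$ a positive integer weight $d_{v,e}$ is given; $d_{v,u}$ is the weight at $v$ of the edge toward $u$. For distinct vertices $u,v$, $\ell_{u,v}$ is the product of all $d_{w,e}$ with $w$ a node on the geodesic $[u,v]$ and $e$ an edge at $w$ not in $[u,v]$. Edge determinant condition: $d_{u,v}d_{v,u}>\ell_{u,v}$ for every edge $[u,v]$ between nodes. With $n$ leaves, $w_\lambda$ is the standard basis vector of $\mathbb{R}^n$ of leaf $\lambda$, $w_u=\sum_\lambda\ell_{u,\lambda}w_\lambda$ for a node $u$, and $\rho(u)=w_u/|w_u|$ ($1$-norm) for each vertex $u$. A subtree $T$ of $\Gamma$ is a connected subgraph; its leaves are its vertices of valency $\le1$ in $T$ and its nodes are its other vertices. $T$ is star-full if for each node $v$ of $T$, all edges of $\Gamma$ adjacent to $v$ belong to $T$. *)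

theory Defs
  imports "HOL-Analysis.Analysis"
begin

text \<open>Graphs: vertex set = the (finite) type 'v, edges = 2-element sets.\<close>

definition simple_graph :: "'v set set \<Rightarrow> bool" where
  "simple_graph E \<longleftrightarrow> (\<forall>e\<in>E. card e = 2)"

definition is_path :: "'v set set \<Rightarrow> 'v list \<Rightarrow> bool" where
  "is_path E xs \<longleftrightarrow> xs \<noteq> [] \<and> distinct xs \<and>
     (\<forall>i. Suc i < length xs \<longrightarrow> {xs ! i, xs ! Suc i} \<in> E)"

definition path_edges :: "'v list \<Rightarrow> 'v set set" where
  "path_edges xs = {{xs ! i, xs ! Suc i} | i. Suc i < length xs}"

definition has_cycle :: "'v set set \<Rightarrow> bool" where
  "has_cycle E \<longleftrightarrow> (\<exists>xs. is_path E xs \<and> length xs \<ge> 3 \<and> {last xs, hd xs} \<in> E)"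

definition connected_on :: "'v set \<Rightarrow> 'v set set \<Rightarrow> bool" where
  "connected_on V E \<longleftrightarrow> V \<noteq> {} \<and>
     (\<forall>x\<in>V. \<forall>y\<in>V. (\<lambda>a b. {a, b} \<in> E)\<^sup>*\<^sup>* x y)"

definition is_tree :: "'v set set \<Rightarrow> bool" where
  "is_tree E \<longleftrightarrow> simple_graph E \<and> connected_on (UNIV :: 'v set) E \<and> \<not> has_cycle E"

definition valency :: "'v set set \<Rightarrow> 'v \<Rightarrow> nat" where
  "valency E v = card {u. {v, u} \<in> E}"

definition is_leaf :: "'v set set \<Rightarrow> 'v \<Rightarrow> bool" where
  "is_leaf E v \<longleftrightarrow> valency E v = 1"

definition is_node :: "'v set set \<Rightarrow> 'v \<Rightarrow> bool" where
  "is_node E v \<longleftrightarrow> \<not> is_leaf E v"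

text \<open>Splice diagram: a finite tree with a vertex of valency \<ge> 3, no vertex of
  valency 2, and positive weights d v u at each node v on the edge from v to
  its neighbour u.\<close>

definition splice_diagram :: "'v set set \<Rightarrow> ('v \<Rightarrow> 'v \<Rightarrow> nat) \<Rightarrow> bool" where
  "splice_diagram E d \<longleftrightarrow> is_tree E \<and> (\<exists>v. valency E v \<ge> 3) \<and>
     (\<forall>v. valency E v \<noteq> 2) \<and>
     (\<forall>v u. is_node E v \<and> {v, u} \<in> E \<longrightarrow> d v u > 0)"

definition geodesic :: "'v set set \<Rightarrow> 'v \<Rightarrow> 'v \<Rightarrow> 'v list" where
  "geodesic E u v = (THE xs. is_path E xs \<and> hd xs = u \<and> last xs = v)"

definition ell :: "'v set set \<Rightarrow> ('v \<Rightarrow> 'v \<Rightarrow> nat) \<Rightarrow> 'v \<Rightarrow> 'v \<Rightarrow> nat" where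
  "ell E d u v =
     (\<Prod>w\<in>{w \<in> set (geodesic E u v). is_node E w}.
        \<Prod>x\<in>{x. {w, x} \<in> E \<and> {w, x} \<notin> path_edges (geodesic E u v)}. d w x)"

definition edge_determinant_condition :: "'v set set \<Rightarrow> ('v \<Rightarrow> 'v \<Rightarrow> nat) \<Rightarrow> bool" where
  "edge_determinant_condition E d \<longleftrightarrow>
     (\<forall>u v. {u, v} \<in> E \<and> is_node E u \<and> is_node E v \<longrightarrow> d u v * d v u > ell E d u v)"

text \<open>Vectors live in real^'v; only the coordinates indexed by leaves are used
  (the standard basis vector of leaf \<lambda> is axis \<lambda> 1), so this is R^n with
  n = number of leaves, embedded linearly in R^V.\<close>

definition wvec :: "'v set set \<Rightarrow> ('v \<Rightarrow> 'v \<Rightarrow> nat) \<Rightarrow> 'v \<Rightarrow> real ^ ('v::finite)" where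
  "wvec E d u = (if is_leaf E u then axis u 1
     else (\<Sum>l\<in>{l. is_leaf E l}. real (ell E d u l) *\<^sub>R axis l 1))"

definition norm1 :: "real ^ ('v::finite) \<Rightarrow> real" where
  "norm1 x = (\<Sum>i\<in>UNIV. \<bar>x $ i\<bar>)"

definition rho :: "'v set set \<Rightarrow> ('v \<Rightarrow> 'v \<Rightarrow> nat) \<Rightarrow> 'v \<Rightarrow> real ^ ('v::finite)" where
  "rho E d u = (1 / norm1 (wvec E d u)) *\<^sub>R wvec E d u"

definition subtree :: "'v set set \<Rightarrow> 'v set \<Rightarrow> 'v set set \<Rightarrow> bool" where
  "subtree E VT ET \<longleftrightarrow> ET \<subseteq> E \<and> (\<forall>e\<in>ET. e \<subseteq> VT) \<and> connected_on VT ET"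

definition sub_leaves :: "'v set \<Rightarrow> 'v set set \<Rightarrow> 'v set" where
  "sub_leaves VT ET = {v \<in> VT. valency ET v \<le> 1}"

definition sub_nodes :: "'v set \<Rightarrow> 'v set set \<Rightarrow> 'v set" where
  "sub_nodes VT ET = VT - sub_leaves VT ET"

definition star_full :: "'v set set \<Rightarrow> 'v set \<Rightarrow> 'v set set \<Rightarrow> bool" where
  "star_full E VT ET \<longleftrightarrow> (\<forall>v\<in>sub_nodes VT ET. \<forall>e\<in>E. v \<in> e \<longrightarrow> e \<in> ET)"

end

theory Submission
  imports Defs
begin

lemma is_path_single[simp]: "is_path E [a]"
  by (simp add: is_path_def)

lemma is_path_Cons2:
  "is_path E (a # b # xs) \<longleftrightarrow> {a,b} \<in> E \<and> a \<notin> set (b # xs) \<and> is_path E (b # xs)"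
proof
  assume h: "is_path E (a # b # xs)"
  have "Suc 0 < length (a#b#xs)" by simp
  then have "{(a#b#xs)!0, (a#b#xs)!Suc 0} \<in> E" using h unfolding is_path_def by blast
  then have "{a,b} \<in> E" by simp
  moreover have "is_path E (b # xs)"
    unfolding is_path_def
  proof (intro conjI allI impI)
    show "distinct (b # xs)" using h by (simp add: is_path_def)
    fix i assume "Suc i < length (b # xs)"
    then have "Suc (Suc i) < length (a # b # xs)" by simp
    then have "{(a#b#xs) ! Suc i, (a#b#xs) ! Suc (Suc i)} \<in> E" using h unfolding is_path_def by blast
    then show "{(b # xs) ! i, (b # xs) ! Suc i} \<in> E" by simp
  qed simp
  ultimately show "{a,b} \<in> E \<and> a \<notin> set (b # xs) \<and> is_path E (b # xs)"
    using h by (simp add: is_path_def)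
next
  assume h: "{a,b} \<in> E \<and> a \<notin> set (b # xs) \<and> is_path E (b # xs)"
  show "is_path E (a # b # xs)"
    unfolding is_path_def
  proof (intro conjI allI impI)
    show "distinct (a # b # xs)" using h by (simp add: is_path_def)
    fix i assume i: "Suc i < length (a # b # xs)"
    show "{(a # b # xs) ! i, (a # b # xs) ! Suc i} \<in> E"
    proof (cases i)
      case 0 then show ?thesis using h by simp
    next
      case (Suc j)
      then have "Suc j < length (b # xs)" using i by simp
      then have "{(b#xs) ! j, (b#xs) ! Suc j} \<in> E" using h unfolding is_path_def by blast
      then show ?thesis using Suc by simp
    qed
  qed simp
qed

lemma is_path_Cons:
  "is_path E (a # xs) \<longleftrightarrow> xs = [] \<or> ({a, hd xs} \<in> E \<and> a \<notin> set xs \<and> is_path E xs)"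
  by (cases xs) (auto simp: is_path_Cons2)

lemma is_path_nonempty: "is_path E xs \<Longrightarrow> xs \<noteq> []"
  by (simp add: is_path_def)

lemma is_path_distinct: "is_path E xs \<Longrightarrow> distinct xs"
  by (simp add: is_path_def)

lemma is_path_append:
  assumes "xs \<noteq> []" "ys \<noteq> []"
  shows "is_path E (xs @ ys) \<longleftrightarrow> is_path E xs \<and> is_path E ys \<and> set xs \<inter> set ys = {} \<and> {last xs, hd ys} \<in> E"
  using assms(1)
proof (induction xs rule: list_nonempty_induct)
  case (single x)
  then show ?case using assms(2) by (auto simp: is_path_Cons)
next
  case (cons x xs)
  then show ?case using assms(2) by (cases xs) (auto simp: is_path_Cons hd_append)
qed

lemma is_path_rev: "is_path E (rev xs) \<longleftrightarrow> is_path E xs"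
proof (induction xs)
  case Nil then show ?case by (simp add: is_path_def)
next
  case (Cons a xs)
  show ?case
  proof (cases "xs = []")
    case True then show ?thesis by simp
  next
    case False
    have "is_path E (rev xs @ [a]) \<longleftrightarrow> is_path E (rev xs) \<and> a \<notin> set xs \<and> {last (rev xs), a} \<in> E"
      using False by (subst is_path_append) auto
    also have "\<dots> \<longleftrightarrow> is_path E (a # xs)"
      using False Cons.IH by (auto simp: is_path_Cons last_rev insert_commute)
    finally show ?thesis by simp
  qed
qed

lemma is_path_mono: "is_path E xs \<Longrightarrow> E \<subseteq> E' \<Longrightarrow> is_path E' xs"
  unfolding is_path_def by blast

lemma path_edges_single[simp]: "path_edges [a] = {}"
  by (simp add: path_edges_def)

lemma path_edges_Cons2: "path_edges (a # b # xs) = insert {a,b} (path_edges (b # xs))"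
proof (rule set_eqI, rule iffI)
  fix e assume "e \<in> path_edges (a # b # xs)"
  then obtain i where i: "Suc i < length (a#b#xs)" "e = {(a#b#xs) ! i, (a#b#xs) ! Suc i}"
    by (auto simp: path_edges_def)
  show "e \<in> insert {a,b} (path_edges (b # xs))"
  proof (cases i)
    case 0 then show ?thesis using i by simp
  next
    case (Suc j)
    then have "Suc j < length (b#xs)" "e = {(b#xs) ! j, (b#xs) ! Suc j}" using i by auto
    then show ?thesis unfolding path_edges_def by blast
  qed
next
  fix e assume "e \<in> insert {a,b} (path_edges (b # xs))"
  then show "e \<in> path_edges (a # b # xs)"
  proof
    assume "e = {a,b}"
    then show ?thesis unfolding path_edges_def by (intro CollectI exI[of _ 0]) simp
  next
    assume "e \<in> path_edges (b # xs)"
    then obtain j where "Suc j < length (b#xs)" "e = {(b#xs) ! j, (b#xs) ! Suc j}"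
      by (auto simp: path_edges_def)
    then show ?thesis unfolding path_edges_def by (intro CollectI exI[of _ "Suc j"]) simp
  qed
qed

lemma path_edges_subset: "e \<in> path_edges xs \<Longrightarrow> e \<subseteq> set xs"
  by (auto simp: path_edges_def)

lemma path_edges_in: "is_path E xs \<Longrightarrow> path_edges xs \<subseteq> E"
  by (auto simp: path_edges_def is_path_def)

lemma walk_to_path:
  assumes "(\<lambda>a b. {a, b} \<in> E)\<^sup>*\<^sup>* x y"
  shows "\<exists>xs. is_path E xs \<and> hd xs = x \<and> last xs = y"
  using assms
proof (induction rule: rtranclp_induct)
  case base
  then show ?case by (intro exI[of _ "[x]"]) simp
next
  case (step y z)
  then obtain xs where xs: "is_path E xs" "hd xs = x" "last xs = y" by blast
  show ?case
  proof (cases "z \<in> set xs")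
    case True
    then obtain ys zs where sp: "xs = ys @ z # zs" by (meson split_list)
    show ?thesis
    proof (cases "zs = []")
      case True then show ?thesis using xs sp by auto
    next
      case False
      have "is_path E ((ys @ [z]) @ zs)" using xs sp by simp
      then have "is_path E (ys @ [z])" using False by (subst (asm) is_path_append) auto
      then show ?thesis using xs sp by (intro exI[of _ "ys @ [z]"]) (cases ys, auto)
    qed
  next
    case False
    have "is_path E (xs @ [z])" using xs False step.hyps(2) is_path_nonempty[OF xs(1)]
      by (subst is_path_append) auto
    then show ?thesis using xs is_path_nonempty[OF xs(1)] by (intro exI[of _ "xs @ [z]"]) auto
  qed
qed

lemma distinct_hd_eq_last:
  assumes "distinct ys" "ys \<noteq> []" "hd ys = last ys" shows "ys = [hd ys]"
proof (cases ys)
  case Nil then show ?thesis using assms by simp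
next
  case (Cons y ys')
  show ?thesis
  proof (cases "ys' = []")
    case True then show ?thesis using Cons by simp
  next
    case False
    then have "last ys' \<in> set ys'" by simp
    then show ?thesis using assms Cons False by auto
  qed
qed

lemma path_unique:
  assumes nc: "\<not> has_cycle E"
  shows "is_path E xs \<Longrightarrow> is_path E ys \<Longrightarrow> hd xs = hd ys \<Longrightarrow> last xs = last ys \<Longrightarrow> xs = ys"
proof (induction xs arbitrary: ys rule: induct_list012)
  case 1 then show ?case by (simp add: is_path_def)
next
  case (2 a)
  then have "ys = [hd ys]" using distinct_hd_eq_last[of ys] is_path_distinct is_path_nonempty by auto
  then show ?case using 2 by (metis list.sel(1))
next
  case (3 a x1 xs')
  have ysne: "ys \<noteq> []" using 3 is_path_nonempty by auto
  then obtain y0 ys0 where ys0: "ys = y0 # ys0" by (cases ys) auto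
  have "ys0 \<noteq> []"
  proof
    assume "ys0 = []"
    then have "last (x1 # xs') = a" using 3 ys0 by simp
    moreover have "last (x1 # xs') \<in> set (x1 # xs')" by (rule last_in_set) simp
    ultimately show False using 3 is_path_distinct[of E "a # x1 # xs'"] by auto
  qed
  then obtain y1 ys' where ys: "ys = a # y1 # ys'" using ys0 3 by (cases ys0) auto
  show ?case
  proof (cases "x1 = y1")
    case True
    then have "x1 # xs' = y1 # ys'"
      using 3 ys by (intro "3.IH"(2)) (auto simp: is_path_Cons2)
    then show ?thesis using ys by simp
  next
    case False
    let ?xs = "a # x1 # xs'"
    have pxs: "is_path E ?xs" and pys: "is_path E (a # y1 # ys')" using 3 ys by auto
    have "last (y1 # ys') = last ?xs" using 3 ys by simp
    then have lasty: "last (y1 # ys') \<in> set ?xs" by (metis last_in_set list.discI)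
    have "\<exists>x\<in>set (y1#ys'). x \<in> set ?xs" using lasty by (intro bexI[of _ "last (y1#ys')"]) auto
    then obtain P c R where spy: "y1 # ys' = P @ c # R" and cx: "c \<in> set ?xs" and Pn: "\<forall>y\<in>set P. y \<notin> set ?xs"
      using split_list_first_prop[of "y1 # ys'" "\<lambda>y. y \<in> set ?xs"] by blast
    obtain X1 X2 where spx: "?xs = X1 @ c # X2" using cx by (meson split_list)
    have "c \<in> set (y1 # ys')" unfolding spy by simp
    moreover have "a \<notin> set (y1 # ys')" using pys by (simp add: is_path_Cons2)
    ultimately have anc: "a \<noteq> c" by blast
    then obtain X1' where X1: "X1 = a # X1'" using spx by (cases X1) auto
    have pyy: "is_path E (y1 # ys')" using pys by (simp add: is_path_Cons2)
    have ptx: "is_path E (X1 @ [c])"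
    proof (cases "X2 = []")
      case True then show ?thesis using pxs spx by simp
    next
      case False
      have "is_path E ((X1 @ [c]) @ X2)" using pxs spx by simp
      then show ?thesis using False by (subst (asm) is_path_append) auto
    qed
    have ea1: "{y1, a} \<in> E" using pys by (auto simp: is_path_Cons2 insert_commute)
    show ?thesis
    proof (cases "P = []")
      case True
      then have cy: "c = y1" using spy by simp
      have "X1' \<noteq> []" using X1 spx cy False by auto
      then have "length (X1 @ [c]) \<ge> 3" using X1 by (cases X1') auto
      moreover have "{last (X1 @ [c]), hd (X1 @ [c])} \<in> E" using X1 cy ea1 by simp
      ultimately have "has_cycle E" using ptx unfolding has_cycle_def by blast
      then show ?thesis using nc by simp
    next
      case False
      have pP: "is_path E (P @ [c])"
      proof (cases "R = []")
        case True then show ?thesis using pyy spy by simp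
      next
        case False
        have "is_path E ((P @ [c]) @ R)" using pyy spy by simp
        then show ?thesis using False by (subst (asm) is_path_append) auto
      qed
      then have pP': "is_path E P" and ePc: "{last P, c} \<in> E" using False by (subst (asm) is_path_append; auto)+
      let ?C = "(X1 @ [c]) @ rev P"
      have "set (X1 @ [c]) \<subseteq> set ?xs" unfolding spx by auto
      then have dis: "set (X1 @ [c]) \<inter> set (rev P) = {}" using Pn by auto
      have "{last (X1 @ [c]), hd (rev P)} \<in> E" using ePc False by (simp add: hd_rev insert_commute)
      then have "is_path E ?C"
        using False ptx pP' dis is_path_append[of "X1 @ [c]" "rev P" E] by (simp add: is_path_rev)
      moreover have "length ?C \<ge> 3" using X1 False by (cases P) auto
      moreover have "hd P = y1" using spy False by (cases P) auto
      then have "{last ?C, hd ?C} \<in> E" using False X1 ea1 by (simp add: last_rev)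
      ultimately have "has_cycle E" unfolding has_cycle_def by blast
      then show ?thesis using nc by simp
    qed
  qed
qed


locale tree =
  fixes E :: "('v::finite) set set"
  assumes tree: "is_tree E"
begin

lemma edge_card: "e \<in> E \<Longrightarrow> card e = 2"
  using tree by (auto simp: is_tree_def simple_graph_def)

lemma edge_neq: "{a,b} \<in> E \<Longrightarrow> a \<noteq> b"
  using edge_card[of "{a,b}"] by auto

lemma conn: "(\<lambda>a b. {a,b} \<in> E)\<^sup>*\<^sup>* x y"
  using tree by (auto simp: is_tree_def connected_on_def)

lemma nc: "\<not> has_cycle E"
  using tree by (auto simp: is_tree_def)

lemma geo_unique: "is_path E xs \<Longrightarrow> is_path E ys \<Longrightarrow> hd xs = hd ys \<Longrightarrow> last xs = last ys \<Longrightarrow> xs = ys"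
  using path_unique[OF nc] by blast

lemma geo: "is_path E (geodesic E x y) \<and> hd (geodesic E x y) = x \<and> last (geodesic E x y) = y"
proof -
  obtain xs where xs: "is_path E xs" "hd xs = x" "last xs = y" using walk_to_path[OF conn] by blast
  have "\<exists>!xs. is_path E xs \<and> hd xs = x \<and> last xs = y"
  proof (rule ex1I[of _ xs])
    fix ys assume "is_path E ys \<and> hd ys = x \<and> last ys = y"
    then show "ys = xs" using xs geo_unique[of ys xs] by simp
  qed (use xs in simp)
  then show ?thesis unfolding geodesic_def by (rule theI')
qed

lemma geo_path: "is_path E (geodesic E x y)" and geo_hd: "hd (geodesic E x y) = x"
  and geo_last: "last (geodesic E x y) = y"
  using geo by auto

lemma geo_eq: "is_path E xs \<Longrightarrow> hd xs = x \<Longrightarrow> last xs = y \<Longrightarrow> geodesic E x y = xs"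
  using geo_unique[of "geodesic E x y" xs] geo[of x y] by simp

lemma geo_refl: "geodesic E x x = [x]"
  by (rule geo_eq) auto

lemma geo_adj: "{x,y} \<in> E \<Longrightarrow> geodesic E x y = [x,y]"
  using edge_neq[of x y] by (intro geo_eq) (auto simp: is_path_Cons2)

lemma geo_ne: "geodesic E x y \<noteq> []"
  using geo_path is_path_nonempty by blast

definition nxt :: "'v \<Rightarrow> 'v \<Rightarrow> 'v" where
  "nxt x y = hd (tl (geodesic E x y))"

lemma geo_split:
  assumes "x \<noteq> y"
  shows "geodesic E x y = x # geodesic E (nxt x y) y" "{x, nxt x y} \<in> E"
    "x \<notin> set (geodesic E (nxt x y) y)"
proof -
  obtain x' t where g0: "geodesic E x y = x' # t" using geo_ne[of x y] by (cases "geodesic E x y") auto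
  then have g: "geodesic E x y = x # t" using geo_hd[of x y] by simp
  have "t \<noteq> []" using g geo_last[of x y] assms by auto
  then have pt: "is_path E t" "{x, hd t} \<in> E" "x \<notin> set t" using g geo_path[of x y] by (auto simp: is_path_Cons)
  have lt: "last t = y" using g geo_last[of x y] \<open>t \<noteq> []\<close> by simp
  have nx: "nxt x y = hd t" using g by (simp add: nxt_def)
  have "geodesic E (nxt x y) y = t" using pt lt nx by (intro geo_eq) auto
  then show "geodesic E x y = x # geodesic E (nxt x y) y" "{x, nxt x y} \<in> E"
    "x \<notin> set (geodesic E (nxt x y) y)" using g pt nx by auto
qed

lemma geo_cons:
  assumes "{x,u} \<in> E" "x \<notin> set (geodesic E u y)"
  shows "geodesic E x y = x # geodesic E u y"
proof -
  have "is_path E (x # geodesic E u y)"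
    using assms geo[of u y] geo_ne[of u y] by (auto simp: is_path_Cons)
  then show ?thesis using geo[of u y] geo_ne[of u y] by (intro geo_eq) auto
qed

lemma not_in_geo:
  assumes "{v,u} \<in> E" "v \<noteq> y" "nxt v y \<noteq> u"
  shows "u \<notin> set (geodesic E v y)"
proof
  assume uin: "u \<in> set (geodesic E v y)"
  have uv: "u \<noteq> v" using edge_neq assms(1) by blast
  obtain A B where sp: "geodesic E v y = A @ u # B" using uin by (meson split_list)
  have g: "geodesic E v y = v # geodesic E (nxt v y) y" using geo_split[OF assms(2)] by simp
  obtain A' where A: "A = v # A'" using sp g uv by (cases A) auto
  have "A' \<noteq> []"
  proof
    assume "A' = []"
    then have "geodesic E (nxt v y) y = u # B" using sp g A by simp
    then have "nxt v y = u" using geo_hd by (metis list.sel(1))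
    then show False using assms by simp
  qed
  have pp: "is_path E (A @ [u])"
  proof (cases "B = []")
    case True then show ?thesis using sp geo_path[of v y] by simp
  next
    case False
    have "is_path E ((A @ [u]) @ B)" using sp geo_path[of v y] by simp
    then show ?thesis using False by (subst (asm) is_path_append) auto
  qed
  moreover have "length (A @ [u]) \<ge> 3" using A \<open>A' \<noteq> []\<close> by (cases A') auto
  moreover have "{last (A @ [u]), hd (A @ [u])} \<in> E" using A assms(1) by (simp add: insert_commute)
  ultimately have "has_cycle E" unfolding has_cycle_def by blast
  then show False using nc by simp
qed

lemma geo_other:
  assumes "{v,u} \<in> E" "v \<noteq> y" "nxt v y \<noteq> u"
  shows "geodesic E u y = u # geodesic E v y"
  using geo_cons[of u v y] not_in_geo[OF assms] assms(1) by (simp add: insert_commute)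

lemma extend_to_leaf:
  assumes "E' \<subseteq> E" "is_path E' xs" "length xs \<ge> 2"
  shows "\<exists>zs. is_path E' (xs @ zs) \<and> {u. {last (xs @ zs), u} \<in> E'} = {last (butlast (xs @ zs))}"
  using assms(2,3)
proof (induction "CARD('v) - length xs" arbitrary: xs rule: less_induct)
  case less
  have xsne: "xs \<noteq> []" using less.prems by auto
  let ?z = "last xs"
  show ?case
  proof (cases "\<exists>y. {?z,y} \<in> E' \<and> y \<notin> set xs")
    case True
    then obtain y where y: "{?z,y} \<in> E'" "y \<notin> set xs" by blast
    have p: "is_path E' (xs @ [y])" using less.prems y xsne by (subst is_path_append) auto
    have "card (set (xs @ [y])) \<le> CARD('v)" by (rule card_mono) auto
    then have "length (xs @ [y]) \<le> CARD('v)" using is_path_distinct[OF p] distinct_card by metis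
    then have "CARD('v) - length (xs @ [y]) < CARD('v) - length xs" by simp
    from less.hyps[OF this p] obtain zs where
      "is_path E' ((xs @ [y]) @ zs) \<and> {u. {last ((xs @ [y]) @ zs), u} \<in> E'} = {last (butlast ((xs @ [y]) @ zs))}"
      using less.prems by auto
    then show ?thesis by (intro exI[of _ "y # zs"]) simp
  next
    case False
    have l2: "length (rev xs) \<ge> 2" using less.prems by simp
    obtain z t where rt: "rev xs = z # t" "length t \<ge> 1" using l2 by (cases "rev xs") auto
    then obtain p R where "t = p # R" by (cases t) auto
    then have rx: "rev xs = z # p # R" using rt by simp
    have "xs = rev (z # p # R)" using rx by (metis rev_rev_ident)
    then have xs: "xs = rev R @ [p, z]" by simp
    have pxs: "is_path E' ((rev R @ [p]) @ [z])" using less.prems xs by simp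
    then have ezp: "{p, z} \<in> E'" by (subst (asm) is_path_append) auto
    have lz: "last xs = z" "last (butlast (xs @ [])) = p" using xs by (simp_all add: butlast_append)
    have "{u. {z, u} \<in> E'} = {p}"
    proof (intro set_eqI iffI)
      fix y assume "y \<in> {u. {z, u} \<in> E'}"
      then have ey: "{z,y} \<in> E'" by simp
      then have yin: "y \<in> set xs" using False lz by blast
      have "y \<noteq> z" using ey assms(1) edge_neq by blast
      show "y \<in> {p}"
      proof (rule ccontr)
        assume "y \<notin> {p}"
        then have "y \<in> set (rev R)" using yin xs \<open>y \<noteq> z\<close> by auto
        then obtain A B where AB: "rev R = A @ y # B" by (meson split_list)
        let ?C = "y # B @ [p, z]"
        have "is_path E' (A @ ?C)" using less.prems xs AB by simp
        then have pC: "is_path E' ?C" by (cases "A = []") (auto simp: is_path_append)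
        then have "is_path E ?C" using assms(1) is_path_mono by blast
        moreover have "length ?C \<ge> 3" by simp
        moreover have "{last ?C, hd ?C} \<in> E" using ey assms(1) by auto
        ultimately have "has_cycle E" unfolding has_cycle_def by blast
        then show False using nc by simp
      qed
    next
      fix y assume "y \<in> {p}"
      then show "y \<in> {u. {z, u} \<in> E'}" using ezp by (simp add: insert_commute)
    qed
    then show ?thesis using less.prems lz by (intro exI[of _ "[]"]) simp
  qed
qed

definition Su :: "'v \<Rightarrow> 'v \<Rightarrow> 'v set" where
  "Su v u = {x. v \<notin> set (geodesic E u x)}"

lemma side_step:
  assumes uv: "{u,v} \<in> E" and x: "x \<in> Su v u" and xy: "{x,y} \<in> E" and ne: "{x,y} \<noteq> {u,v}"
  shows "y \<in> Su v u"
proof -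
  let ?g = "geodesic E u x"
  have vg: "v \<notin> set ?g" using x by (simp add: Su_def)
  show ?thesis
  proof (cases "y \<in> set ?g")
    case True
    then obtain A B where sp: "?g = A @ y # B" by (meson split_list)
    have pp: "is_path E (A @ [y])"
    proof (cases "B = []")
      case True then show ?thesis using sp geo_path[of u x] by simp
    next
      case False
      have "is_path E ((A @ [y]) @ B)" using sp geo_path[of u x] by simp
      then show ?thesis using False by (subst (asm) is_path_append) auto
    qed
    have "hd (A @ [y]) = u" using sp geo_hd[of u x] by (cases A) auto
    then have "geodesic E u y = A @ [y]" using pp by (intro geo_eq) auto
    then show ?thesis using vg sp by (auto simp: Su_def)
  next
    case False
    have p: "is_path E (?g @ [y])" using False geo[of u x] geo_ne[of u x] xy by (subst is_path_append) auto
    then have gy: "geodesic E u y = ?g @ [y]" using geo[of u x] geo_ne[of u x] by (intro geo_eq) auto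
    have "y \<noteq> v"
    proof
      assume "y = v"
      then have "?g @ [v] = [u, v]" using gy geo_adj[OF uv] by simp
      then have "?g = [u]" by simp
      then have "x = u" using geo_last[of u x] by simp
      then show False using ne \<open>y = v\<close> by simp
    qed
    then show ?thesis using gy vg by (auto simp: Su_def)
  qed
qed

lemma side_walk:
  assumes uv: "{u,v} \<in> E"
  shows "is_path E xs \<Longrightarrow> hd xs \<in> Su v u \<Longrightarrow> u \<notin> set xs \<or> v \<notin> set xs \<Longrightarrow> last xs \<in> Su v u"
proof (induction xs)
  case Nil then show ?case by (simp add: is_path_def)
next
  case (Cons a xs)
  show ?case
  proof (cases "xs = []")
    case True then show ?thesis using Cons by simp
  next
    case False
    have e: "{a, hd xs} \<in> E" and pxs: "is_path E xs" using Cons.prems False by (auto simp: is_path_Cons)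
    have "{a, hd xs} \<noteq> {u,v}"
    proof
      assume "{a, hd xs} = {u,v}"
      then have "u \<in> set (a # xs)" "v \<in> set (a # xs)" using False by (auto simp: doubleton_eq_iff)
      then show False using Cons.prems(3) by blast
    qed
    then have "hd xs \<in> Su v u" using side_step[OF uv _ e] Cons.prems by simp
    then have "last xs \<in> Su v u" using Cons.IH pxs Cons.prems(3) by auto
    then show ?thesis using False by simp
  qed
qed

lemma Su_self: "{u,v} \<in> E \<Longrightarrow> u \<in> Su v u"
  using edge_neq by (auto simp: Su_def geo_refl)

end


locale sd = tree E for E :: "('v::finite) set set" +
  fixes d :: "'v \<Rightarrow> 'v \<Rightarrow> nat"
  assumes sd: "splice_diagram E d"
begin

definition NB :: "'v \<Rightarrow> 'v set" where "NB v = {u. {v,u} \<in> E}"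

lemma valency_NB: "valency E v = card (NB v)"
  by (simp add: valency_def NB_def)

lemma dpos: "is_node E w \<Longrightarrow> {w,x} \<in> E \<Longrightarrow> d w x > 0"
  using sd by (auto simp: splice_diagram_def)

definition Q :: "'v \<Rightarrow> 'v \<Rightarrow> nat" where "Q v u = (\<Prod>x\<in>NB v - {u}. d v x)"

lemma Q_pos: "is_node E v \<Longrightarrow> Q v u > 0"
  unfolding Q_def using dpos by (auto simp: NB_def intro!: prod_pos)

lemma prod_NB: "u \<in> NB v \<Longrightarrow> (\<Prod>x\<in>NB v. d v x) = d v u * Q v u"
  unfolding Q_def by (rule prod.remove) simp_all

definition ellp :: "'v list \<Rightarrow> nat" where
  "ellp xs = (\<Prod>w\<in>{w \<in> set xs. is_node E w}.
        \<Prod>x\<in>{x. {w, x} \<in> E \<and> {w, x} \<notin> path_edges xs}. d w x)"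

lemma ell_eq: "ell E d u v = ellp (geodesic E u v)"
  by (simp add: ell_def ellp_def)

lemma ellp_single: "ellp [a] = (if is_node E a then (\<Prod>x\<in>NB a. d a x) else 1)"
proof -
  have "{w \<in> set [a]. is_node E w} = (if is_node E a then {a} else {})" by auto
  then show ?thesis by (simp add: ellp_def NB_def)
qed

lemma ellp_pos: "ellp xs > 0"
  unfolding ellp_def using dpos by (auto intro!: prod_pos)

lemma ellp_cons:
  assumes p: "is_path E (a # ys)" and ne: "ys \<noteq> []"
  shows "ellp (a # ys) * (if is_node E (hd ys) then d (hd ys) a else 1)
       = (if is_node E a then Q a (hd ys) else 1) * ellp ys"
proof -
  obtain b ys' where ys: "ys = b # ys'" using ne by (cases ys) auto
  have ab: "{a,b} \<in> E" and anot: "a \<notin> set ys" and pys: "is_path E ys" using p ys by (auto simp: is_path_Cons2)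
  have pe: "path_edges (a # ys) = insert {a,b} (path_edges ys)" using ys by (simp add: path_edges_Cons2)
  define X where "X xs w = {x. {w, x} \<in> E \<and> {w, x} \<notin> path_edges xs}" for xs w
  define F where "F xs w = (\<Prod>x\<in>X xs w. d w x)" for xs w
  define Nd where "Nd = {w \<in> set ys. is_node E w}"
  have fin: "finite A" for A :: "'v set" by simp
  have ellp_F: "ellp xs = (\<Prod>w\<in>{w \<in> set xs. is_node E w}. F xs w)" for xs
    by (simp add: ellp_def F_def X_def)
  have pa: "{a,x} \<notin> path_edges ys" for x using anot path_edges_subset by blast
  have Xa: "X (a # ys) a = NB a - {b}"
    unfolding X_def NB_def pe using pa by (auto simp: doubleton_eq_iff)
  have Xw: "X (a # ys) w = X ys w" if "w \<in> set ys" "w \<noteq> b" for w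
    unfolding X_def pe using that anot by (auto simp: doubleton_eq_iff)
  have ainX: "a \<in> X ys b" unfolding X_def using ab pa[of b] by (auto simp: insert_commute)
  have Xb: "X (a # ys) b = X ys b - {a}"
    unfolding X_def pe by (auto simp: doubleton_eq_iff)
  have Fb: "F ys b = d b a * F (a # ys) b"
    unfolding F_def Xb by (rule prod.remove[OF fin ainX])
  have Fys: "F ys w = F (a # ys) w * (if w = b then d b a else 1)" if "w \<in> Nd" for w
    using that Fb Xw[of w] by (auto simp: F_def Nd_def)
  have bNd: "b \<in> Nd \<longleftrightarrow> is_node E b" by (simp add: Nd_def ys)
  have "ellp ys = (\<Prod>w\<in>Nd. F (a # ys) w) * (\<Prod>w\<in>Nd. (if w = b then d b a else 1))"
    unfolding ellp_F Nd_def[symmetric] by (simp add: Fys prod.distrib)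
  also have "(\<Prod>w\<in>Nd. (if w = b then d b a else 1)) = (if is_node E b then d b a else 1)"
    using bNd by (simp add: prod.delta)
  finally have e1: "ellp ys = (\<Prod>w\<in>Nd. F (a # ys) w) * (if is_node E b then d b a else 1)" .
  have setn: "{w \<in> set (a # ys). is_node E w} = (if is_node E a then insert a Nd else Nd)"
    by (auto simp: Nd_def)
  have aNd: "a \<notin> Nd" using anot by (simp add: Nd_def)
  have e2: "ellp (a # ys) = (if is_node E a then Q a b else 1) * (\<Prod>w\<in>Nd. F (a # ys) w)"
    unfolding ellp_F setn using aNd by (simp add: F_def Xa Q_def)
  show ?thesis using e1 e2 ys by simp
qed

end


lemma sum_axis: "finite A \<Longrightarrow> (\<Sum>l\<in>A. c l *\<^sub>R axis l (1::real)) $ i = (if i \<in> A then c i else 0)"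
  by (simp add: axis_def if_distrib sum.delta cong: if_cong)

context sd
begin

lemma node_iff: "is_node E v \<longleftrightarrow> \<not> is_leaf E v"
  by (simp add: is_node_def)

lemma leaf_NB: "is_leaf E u \<Longrightarrow> {v,u} \<in> E \<Longrightarrow> NB u = {v}"
proof -
  assume l: "is_leaf E u" and e: "{v,u} \<in> E"
  have "card (NB u) = 1" using l by (simp add: is_leaf_def valency_NB)
  moreover have "v \<in> NB u" using e by (simp add: NB_def insert_commute)
  ultimately show "NB u = {v}" by (metis card_1_singletonE singletonD)
qed

lemma E1:
  assumes "l \<noteq> v"
  shows "ell E d v l * (if is_node E (nxt v l) then d (nxt v l) v else 1)
       = (if is_node E v then Q v (nxt v l) else 1) * ell E d (nxt v l) l"
proof -
  have g: "geodesic E v l = v # geodesic E (nxt v l) l" using geo_split[of v l] assms by auto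
  have "is_path E (v # geodesic E (nxt v l) l)" using g geo_path by metis
  from ellp_cons[OF this geo_ne] show ?thesis
    unfolding geo_hd by (simp add: ell_eq g)
qed

lemma E2:
  assumes "{v,u} \<in> E" "l \<noteq> v" "nxt v l \<noteq> u"
  shows "ell E d u l * (if is_node E v then d v u else 1)
       = (if is_node E u then Q u v else 1) * ell E d v l"
proof -
  have g: "geodesic E u l = u # geodesic E v l" using geo_other[OF assms(1) _ assms(3)] assms(2) by simp
  have "is_path E (u # geodesic E v l)" using g geo_path by metis
  from ellp_cons[OF this geo_ne] show ?thesis
    unfolding geo_hd by (simp add: ell_eq g)
qed

lemma E3:
  assumes "{u,v} \<in> E" "is_node E u" "is_node E v"
  shows "ell E d u v = Q u v * Q v u"
proof -
  have g: "geodesic E u v = [u, v]" using geo_adj[OF assms(1)] .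
  have "is_path E [u, v]" using g geo_path by metis
  from ellp_cons[OF this] have "ellp [u,v] * d v u = Q u v * ellp [v]" using assms by simp
  also have "ellp [v] = (\<Prod>x\<in>NB v. d v x)" using assms by (simp add: ellp_single)
  also have "\<dots> = d v u * Q v u" using assms by (intro prod_NB) (simp add: NB_def insert_commute)
  finally have "ellp [u,v] * d v u = (Q u v * Q v u) * d v u" by (simp only: mult_ac)
  moreover have "d v u > 0" using dpos assms by (simp add: insert_commute)
  ultimately have "ellp [u,v] = Q u v * Q v u" by simp
  then show ?thesis using g by (simp add: ell_eq)
qed

lemma ell_leaf_adj:
  assumes "{v,u} \<in> E" "is_leaf E u"
  shows "ell E d v u = (if is_node E v then Q v u else 1)"
proof -
  have g: "geodesic E v u = [v, u]" using geo_adj[OF assms(1)] .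
  have "is_path E [v, u]" using g geo_path by metis
  from ellp_cons[OF this] show ?thesis using assms g by (simp add: ell_eq ellp_single node_iff)
qed

lemma wvec_nth: "wvec E d u $ i = (if is_leaf E u then (if i = u then 1 else 0)
    else (if is_leaf E i then real (ell E d u i) else 0))"
proof (cases "is_leaf E u")
  case True then show ?thesis by (simp add: wvec_def axis_def)
next
  case False
  then have "wvec E d u $ i = (\<Sum>l\<in>{l. is_leaf E l}. real (ell E d u l) *\<^sub>R axis l 1) $ i"
    by (simp add: wvec_def)
  also have "\<dots> = (if i \<in> {l. is_leaf E l} then real (ell E d u i) else 0)" by (rule sum_axis) simp
  finally show ?thesis using False by simp
qed

definition Sv :: "'v \<Rightarrow> 'v \<Rightarrow> real ^ 'v" where
  "Sv v u = (\<chi> i. if is_leaf E i \<and> nxt v i = u then real (ell E d v i) else 0)"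

lemma nxt_NB: "l \<noteq> v \<Longrightarrow> nxt v l \<in> NB v"
  using geo_split(2)[of v l] by (simp add: NB_def)

lemma wvec_S_sum:
  assumes "is_node E v"
  shows "wvec E d v = (\<Sum>u\<in>NB v. Sv v u)"
unfolding vec_eq_iff proof (intro allI)
  fix i
  show "wvec E d v $ i = (\<Sum>u\<in>NB v. Sv v u) $ i"
  proof (cases "is_leaf E i")
    case True
    then have "i \<noteq> v" using assms by (auto simp: node_iff)
    then have "nxt v i \<in> NB v" by (rule nxt_NB)
    then show ?thesis using True assms
      by (simp add: wvec_nth Sv_def node_iff if_distrib sum.delta cong: if_cong)
  next
    case False
    then show ?thesis using assms by (simp add: wvec_nth Sv_def node_iff)
  qed
qed

lemma nxt_adj: "{v,u} \<in> E \<Longrightarrow> nxt v u = u"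
  by (simp add: nxt_def geo_adj)

lemma leaf_branch:
  assumes "{v,u} \<in> E" "is_leaf E u" "is_node E v" "is_leaf E i" "nxt v i = u"
  shows "i = u"
proof (rule ccontr)
  assume iu: "i \<noteq> u"
  have iv: "v \<noteq> i" using assms by (auto simp: node_iff)
  have iu': "u \<noteq> i" using iu by simp
  have g: "geodesic E v i = v # geodesic E u i" using geo_split(1)[OF iv] assms by simp
  have vn: "v \<notin> set (geodesic E u i)" using geo_split(3)[OF iv] assms by simp
  have "nxt u i \<in> NB u" using nxt_NB iu by simp
  then have "nxt u i = v" using leaf_NB[OF assms(2) assms(1)] by simp
  moreover have "hd (geodesic E (nxt u i) i) \<in> set (geodesic E (nxt u i) i)" using geo_ne by (rule hd_in_set)
  ultimately have "v \<in> set (geodesic E (nxt u i) i)" by (simp add: geo_hd)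
  then have "v \<in> set (geodesic E u i)" using geo_split(1)[OF iu'] by simp
  then show False using vn by simp
qed

end

locale sde = sd +
  assumes edc: "edge_determinant_condition E d"
begin

lemma edc': "{u,v} \<in> E \<Longrightarrow> is_node E u \<Longrightarrow> is_node E v \<Longrightarrow> d u v * d v u > Q u v * Q v u"
  using edc E3 by (auto simp: edge_determinant_condition_def)

lemma local_rel:
  assumes v: "is_node E v" and u: "u \<in> NB v"
  shows "\<exists>\<beta> \<gamma>. \<beta> > 0 \<and> \<gamma> \<ge> 0 \<and> wvec E d u = \<beta> *\<^sub>R Sv v u + \<gamma> *\<^sub>R wvec E d v"
proof (cases "is_leaf E u")
  case True
  have e: "{v,u} \<in> E" using u by (simp add: NB_def)
  have Qp: "Q v u > 0" using Q_pos v by simp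
  have "wvec E d u = (1 / real (Q v u)) *\<^sub>R Sv v u + 0 *\<^sub>R wvec E d v"
  unfolding vec_eq_iff proof (intro allI)
    fix i
    show "wvec E d u $ i = ((1 / real (Q v u)) *\<^sub>R Sv v u + 0 *\<^sub>R wvec E d v) $ i"
    proof (cases "is_leaf E i \<and> nxt v i = u")
      case True
      then have "i = u" using leaf_branch[OF e \<open>is_leaf E u\<close> v] by blast
      then show ?thesis using True Qp ell_leaf_adj[OF e \<open>is_leaf E u\<close>] v \<open>is_leaf E u\<close>
        by (simp add: wvec_nth Sv_def)
    next
      case False
      then have "i \<noteq> u" using nxt_adj[OF e] \<open>is_leaf E u\<close> by auto
      then show ?thesis using False \<open>is_leaf E u\<close> by (auto simp: wvec_nth Sv_def)
    qed
  qed
  then show ?thesis using Qp by (intro exI[of _ "1 / real (Q v u)"] exI[of _ 0]) auto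
next
  case False
  then have un: "is_node E u" by (simp add: node_iff)
  have e: "{v,u} \<in> E" using u by (simp add: NB_def)
  have e': "{u,v} \<in> E" using e by (simp add: insert_commute)
  have Qp: "Q v u > 0" "Q u v > 0" using Q_pos v un by auto
  have dp: "d v u > 0" "d u v > 0" using dpos v un e e' by auto
  define \<beta> where "\<beta> = real (d u v) / real (Q v u) - real (Q u v) / real (d v u)"
  define \<gamma> where "\<gamma> = real (Q u v) / real (d v u)"
  have "real (Q u v) * real (Q v u) < real (d u v) * real (d v u)"
    using edc'[OF e' un v] by (simp flip: of_nat_mult)
  then have bp: "\<beta> > 0" using Qp dp unfolding \<beta>_def by (simp add: field_simps)
  have gp: "\<gamma> \<ge> 0" unfolding \<gamma>_def by simp
  have "wvec E d u = \<beta> *\<^sub>R Sv v u + \<gamma> *\<^sub>R wvec E d v"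
  unfolding vec_eq_iff proof (intro allI)
    fix i
    show "wvec E d u $ i = (\<beta> *\<^sub>R Sv v u + \<gamma> *\<^sub>R wvec E d v) $ i"
    proof (cases "is_leaf E i")
      case il: True
      then have iv: "i \<noteq> v" using v by (auto simp: node_iff)
      show ?thesis
      proof (cases "nxt v i = u")
        case True
        have "ell E d v i * d u v = Q v u * ell E d u i" using E1[OF iv] True un v by simp
        then have "real (ell E d v i) * real (d u v) = real (Q v u) * real (ell E d u i)"
          by (metis of_nat_mult)
        then have "real (ell E d u i) = real (ell E d v i) * real (d u v) / real (Q v u)"
          using Qp by (simp add: field_simps)
        then show ?thesis using il True False v
          by (simp add: wvec_nth Sv_def \<beta>_def \<gamma>_def node_iff field_simps)
      next
        case nt: False
        have "ell E d u i * d v u = Q u v * ell E d v i" using E2[OF e iv nt] un v by simp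
        then have "real (ell E d u i) * real (d v u) = real (Q u v) * real (ell E d v i)"
          by (metis of_nat_mult)
        then have "real (ell E d u i) = real (Q u v) * real (ell E d v i) / real (d v u)"
          using dp by (simp add: field_simps)
        then show ?thesis using il nt False v
          by (simp add: wvec_nth Sv_def \<gamma>_def node_iff)
      qed
    next
      case nl: False
      then show ?thesis using False v by (simp add: wvec_nth Sv_def node_iff)
    qed
  qed
  then show ?thesis using bp gp by blast
qed

end


definition vsum :: "real ^ ('v::finite) \<Rightarrow> real" where "vsum x = (\<Sum>i\<in>UNIV. x $ i)"

lemma linear_vsum: "linear vsum"
  unfolding vsum_def by (intro linearI) (simp_all add: sum.distrib sum_distrib_left)

lemma vsum_sum: "vsum (\<Sum>u\<in>A. f u) = (\<Sum>u\<in>A. vsum (f u))"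
  by (rule linear_sum[OF linear_vsum])

lemma vsum_scale: "vsum (c *\<^sub>R x) = c * vsum x"
  using linear_scale[OF linear_vsum] by simp

lemma norm1_vsum: "(\<And>i. x $ i \<ge> 0) \<Longrightarrow> norm1 x = vsum x"
  by (simp add: norm1_def vsum_def)

context sd
begin

lemma wvec_nonneg: "wvec E d u $ i \<ge> 0"
  by (simp add: wvec_nth)

lemma node_has_nb: "is_node E u \<Longrightarrow> NB u \<noteq> {}"
proof -
  assume u: "is_node E u"
  obtain w where w: "valency E w \<ge> 3" using sd by (auto simp: splice_diagram_def)
  show "NB u \<noteq> {}"
  proof (cases "u = w")
    case True then show ?thesis using w by (auto simp: valency_NB)
  next
    case False then show ?thesis using nxt_NB[of w u] by auto
  qed
qed

lemma branch_nonempty: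
  assumes v: "is_node E v" and u: "u \<in> NB v"
  shows "\<exists>l. is_leaf E l \<and> nxt v l = u"
proof (cases "is_leaf E u")
  case True
  then show ?thesis using nxt_adj u by (auto simp: NB_def)
next
  case False
  have e: "{v,u} \<in> E" using u by (simp add: NB_def)
  have p: "is_path E [v,u]" using e edge_neq[OF e] by (simp add: is_path_Cons2)
  obtain zs where zs: "is_path E ([v,u] @ zs)" and nb: "{x. {last ([v,u] @ zs), x} \<in> E} = {last (butlast ([v,u] @ zs))}"
    using extend_to_leaf[of E "[v,u]"] p by auto
  let ?z = "last ([v,u] @ zs)"
  have "valency E ?z = 1" using nb by (simp add: valency_def)
  then have lz: "is_leaf E ?z" by (simp add: is_leaf_def)
  have "geodesic E v ?z = v # u # zs" using zs by (intro geo_eq) auto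
  then have "nxt v ?z = u" by (simp add: nxt_def)
  then show ?thesis using lz by blast
qed

lemma wvec_pos_entry: "\<exists>i. wvec E d u $ i > 0"
proof (cases "is_leaf E u")
  case True then show ?thesis by (intro exI[of _ u]) (simp add: wvec_nth)
next
  case False
  then have n: "is_node E u" by (simp add: node_iff)
  then obtain x where "x \<in> NB u" using node_has_nb by blast
  then obtain l where "is_leaf E l" using branch_nonempty[OF n] by blast
  then show ?thesis using False ellp_pos by (intro exI[of _ l]) (simp add: wvec_nth ell_eq)
qed

lemma norm1_pos: "norm1 (wvec E d u) > 0"
proof -
  obtain i where i: "wvec E d u $ i > 0" using wvec_pos_entry by blast
  have "\<bar>wvec E d u $ i\<bar> \<le> (\<Sum>j\<in>UNIV. \<bar>wvec E d u $ j\<bar>)"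
    by (rule member_le_sum) auto
  then have "wvec E d u $ i \<le> norm1 (wvec E d u)"
    unfolding norm1_def using wvec_nonneg[of u i] by simp
  then show ?thesis using i by simp
qed

lemma wvec_rho: "wvec E d u = norm1 (wvec E d u) *\<^sub>R rho E d u"
  using norm1_pos[of u] by (simp add: rho_def)

lemma vsum_rho: "vsum (rho E d u) = 1"
proof -
  have "vsum (rho E d u) = (1 / norm1 (wvec E d u)) * vsum (wvec E d u)"
    by (simp add: rho_def vsum_scale)
  also have "vsum (wvec E d u) = norm1 (wvec E d u)" using norm1_vsum wvec_nonneg by metis
  finally show ?thesis using norm1_pos[of u] by simp
qed

lemma rho_nonneg: "rho E d u $ i \<ge> 0"
  using norm1_pos[of u] wvec_nonneg[of u i] by (simp add: rho_def)

lemma rho_ne0: "rho E d u \<noteq> 0"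
  using vsum_rho[of u] by (auto simp: vsum_def)

lemma Sv_nth: "Sv v u $ i = (if is_leaf E i \<and> nxt v i = u then real (ell E d v i) else 0)"
  by (simp add: Sv_def)

lemma Sv_pos:
  assumes "is_node E v" "u \<in> NB v"
  shows "\<exists>i. Sv v u $ i > 0"
  using branch_nonempty[OF assms] ellp_pos by (auto simp: Sv_nth ell_eq)

end

context sde
begin

lemma harmonic:
  assumes v: "is_node E v"
  shows "\<exists>p. (\<forall>u\<in>NB v. p u > 0) \<and> sum p (NB v) = 1 \<and> rho E d v = (\<Sum>u\<in>NB v. p u *\<^sub>R rho E d u)"
proof -
  have "\<forall>u\<in>NB v. \<exists>bg. fst bg > 0 \<and> snd bg \<ge> 0 \<and> wvec E d u = fst bg *\<^sub>R Sv v u + snd bg *\<^sub>R wvec E d v"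
    using local_rel[OF v] by force
  then obtain bg where bg: "\<And>u. u \<in> NB v \<Longrightarrow> fst (bg u) > 0 \<and> snd (bg u) \<ge> 0 \<and>
      wvec E d u = fst (bg u) *\<^sub>R Sv v u + snd (bg u) *\<^sub>R wvec E d v"
    by metis
  define \<beta> where "\<beta> u = fst (bg u)" for u
  define \<gamma> where "\<gamma> u = snd (bg u)" for u
  let ?w = "wvec E d"
  have S: "Sv v u = (1 / \<beta> u) *\<^sub>R (?w u - \<gamma> u *\<^sub>R ?w v)" if "u \<in> NB v" for u
    using bg[OF that] unfolding \<beta>_def \<gamma>_def by (simp add: algebra_simps)
  define G where "G = (\<Sum>u\<in>NB v. \<gamma> u / \<beta> u)"
  have "\<forall>u\<in>NB v. \<gamma> u / \<beta> u \<ge> 0" using bg by (simp add: \<beta>_def \<gamma>_def divide_nonneg_pos)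
  then have G0: "G \<ge> 0" unfolding G_def by (intro sum_nonneg) auto
  have "?w v = (\<Sum>u\<in>NB v. (1 / \<beta> u) *\<^sub>R (?w u - \<gamma> u *\<^sub>R ?w v))"
    using wvec_S_sum[OF v] S by simp
  also have "\<dots> = (\<Sum>u\<in>NB v. (1 / \<beta> u) *\<^sub>R ?w u) - G *\<^sub>R ?w v"
    by (simp add: G_def scaleR_diff_right sum_subtractf scaleR_sum_left)
  finally have "(1 + G) *\<^sub>R ?w v = (\<Sum>u\<in>NB v. (1 / \<beta> u) *\<^sub>R ?w u)"
    by (simp add: algebra_simps)
  then have wv0: "?w v = (1 / (1 + G)) *\<^sub>R (\<Sum>u\<in>NB v. (1 / \<beta> u) *\<^sub>R ?w u)"
    using G0 by (metis (no_types, lifting) add_pos_nonneg less_numeral_extra(1) nonzero_divide_eq_eq scaleR_one scaleR_scaleR divide_self_if less_irrefl)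
  have wv: "?w v = (\<Sum>u\<in>NB v. (1 / ((1 + G) * \<beta> u)) *\<^sub>R ?w u)"
    unfolding wv0 by (simp add: scaleR_sum_right)
  define p where "p u = norm1 (?w u) / ((1 + G) * \<beta> u * norm1 (?w v))" for u
  have pp1: "p u > 0" if "u \<in> NB v" for u
  proof -
    have b: "\<beta> u > 0" using bg[OF that] by (simp add: \<beta>_def)
    have "(1 + G) * \<beta> u * norm1 (?w v) > 0" using b G0 norm1_pos[of v] by simp
    then show ?thesis unfolding p_def using norm1_pos[of u] by simp
  qed
  then have pp: "\<forall>u\<in>NB v. p u > 0" by blast
  have rv: "rho E d v = (\<Sum>u\<in>NB v. p u *\<^sub>R rho E d u)"
  proof -
    have "rho E d v = (1 / norm1 (?w v)) *\<^sub>R ?w v" by (simp add: rho_def)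
    also have "\<dots> = (\<Sum>u\<in>NB v. (1 / norm1 (?w v)) *\<^sub>R ((1 / ((1 + G) * \<beta> u)) *\<^sub>R (norm1 (?w u) *\<^sub>R rho E d u)))"
      by (subst wv, subst wvec_rho) (simp add: scaleR_sum_right)
    also have "\<dots> = (\<Sum>u\<in>NB v. p u *\<^sub>R rho E d u)"
      by (intro sum.cong refl) (simp add: p_def field_simps)
    finally show ?thesis .
  qed
  have "1 = vsum (rho E d v)" by (simp add: vsum_rho)
  also have "\<dots> = sum p (NB v)" by (simp add: rv vsum_sum vsum_scale vsum_rho)
  finally show ?thesis using pp rv by auto
qed

lemma Sv_span:
  assumes v: "is_node E v" and u: "u \<in> NB v"
  shows "Sv v u \<in> span {rho E d u, rho E d v}"
proof -
  obtain \<beta> \<gamma> where bg: "\<beta> > 0" "wvec E d u = \<beta> *\<^sub>R Sv v u + \<gamma> *\<^sub>R wvec E d v"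
    using local_rel[OF v u] by blast
  then have "Sv v u = (1 / \<beta>) *\<^sub>R (wvec E d u - \<gamma> *\<^sub>R wvec E d v)" by (simp add: algebra_simps)
  also have "\<dots> = (norm1 (wvec E d u) / \<beta>) *\<^sub>R rho E d u - (\<gamma> * norm1 (wvec E d v) / \<beta>) *\<^sub>R rho E d v"
    by (subst (1 2) wvec_rho) (simp add: algebra_simps)
  finally show ?thesis
    by (simp add: span_diff span_scale span_base)
qed

end


locale st = sde E d for E :: "('v::finite) set set" and d +
  fixes VT :: "'v set" and ET :: "'v set set"
  assumes subt: "subtree E VT ET" and sfull: "star_full E VT ET"
begin

abbreviation "L \<equiv> sub_leaves VT ET"
abbreviation "N \<equiv> sub_nodes VT ET"

definition NT :: "'v \<Rightarrow> 'v set" where "NT v = {u. {v,u} \<in> ET}"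

lemma ET_sub: "ET \<subseteq> E" using subt by (simp add: subtree_def)

lemma edge_VT: "{a,b} \<in> ET \<Longrightarrow> a \<in> VT \<and> b \<in> VT"
  using subt by (auto simp: subtree_def)

lemma VT_ne: "VT \<noteq> {}" using subt by (simp add: subtree_def connected_on_def)

lemma L_def': "L = {v \<in> VT. card (NT v) \<le> 1}"
  by (simp add: sub_leaves_def valency_def NT_def)

lemma N_def': "N = VT - L" by (simp add: sub_nodes_def)

lemma LN: "x \<in> L \<Longrightarrow> x \<notin> N" by (simp add: N_def')

lemma L_VT: "L \<subseteq> VT" by (auto simp: L_def')

lemma pathT: "x \<in> VT \<Longrightarrow> y \<in> VT \<Longrightarrow> \<exists>xs. is_path ET xs \<and> hd xs = x \<and> last xs = y"
  using subt walk_to_path[of ET x y] by (auto simp: subtree_def connected_on_def)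

lemma pathT_E: "is_path ET xs \<Longrightarrow> is_path E xs"
  using is_path_mono ET_sub by blast

lemma path_VT: "is_path ET xs \<Longrightarrow> hd xs \<in> VT \<Longrightarrow> set xs \<subseteq> VT"
proof (induction xs)
  case Nil then show ?case by simp
next
  case (Cons a xs)
  show ?case
  proof (cases "xs = []")
    case True then show ?thesis using Cons by simp
  next
    case False
    then have "{a, hd xs} \<in> ET" "is_path ET xs" using Cons.prems by (auto simp: is_path_Cons)
    then show ?thesis using Cons edge_VT by auto
  qed
qed

lemma interior_N:
  assumes p: "is_path ET (A @ x # B)" and A: "A \<noteq> []" and B: "B \<noteq> []"
  shows "x \<in> N"
proof -
  have p1: "is_path ET A" "is_path ET (x # B)" "{last A, x} \<in> ET" "set A \<inter> set (x # B) = {}"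
    using p A is_path_append[of A "x # B" ET] by auto
  have e2: "{x, hd B} \<in> ET" using p1(2) B by (simp add: is_path_Cons)
  have ds: "last A \<noteq> hd B" using p1(4) A B by (metis IntI empty_iff hd_in_set last_in_set list.set_intros(2))
  have "{last A, hd B} \<subseteq> NT x" using p1(3) e2 by (auto simp: NT_def insert_commute)
  then have "card {last A, hd B} \<le> card (NT x)" by (intro card_mono) auto
  then have "card (NT x) \<ge> 2" using ds by simp
  moreover have "x \<in> VT" using e2 edge_VT by blast
  ultimately show ?thesis by (auto simp: N_def' L_def')
qed

lemma butlast_N:
  assumes p: "is_path ET xs" and h: "hd xs \<in> N" and x: "x \<in> set xs" "x \<noteq> last xs"
  shows "x \<in> N"
proof -
  obtain A B where sp: "xs = A @ x # B" using x by (meson split_list)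
  show ?thesis
  proof (cases "A = []")
    case True then show ?thesis using h sp by simp
  next
    case False
    have "B \<noteq> []" using x sp by auto
    then show ?thesis using interior_N p sp False by blast
  qed
qed

lemma node_props:
  assumes v: "v \<in> N"
  shows "NB v = NT v" "is_node E v" "NT v \<subseteq> VT" "card (NT v) \<ge> 2"
proof -
  show nb: "NB v = NT v"
    using sfull v ET_sub by (auto simp: star_full_def NB_def NT_def)
  show c: "card (NT v) \<ge> 2" using v by (auto simp: N_def' L_def')
  show "is_node E v" using nb c by (simp add: is_node_def is_leaf_def valency_NB)
  show "NT v \<subseteq> VT" using edge_VT by (auto simp: NT_def)
qed

lemma reach_leaf:
  assumes v: "v \<in> N"
  shows "\<exists>xs. is_path ET xs \<and> hd xs = v \<and> last xs \<in> L"
proof -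
  have "NT v \<noteq> {}" using node_props(4)[OF v] by auto
  then obtain y where y: "{v,y} \<in> ET" by (auto simp: NT_def)
  have "v \<noteq> y" using y ET_sub edge_neq by blast
  then have p: "is_path ET [v,y]" using y by (simp add: is_path_Cons2)
  obtain zs where zs: "is_path ET ([v,y] @ zs)" and nb: "{x. {last ([v,y] @ zs), x} \<in> ET} = {last (butlast ([v,y] @ zs))}"
    using extend_to_leaf[OF ET_sub p] by auto
  let ?z = "last ([v,y] @ zs)"
  have "?z \<in> VT" using path_VT[OF zs] v by (auto simp: N_def')
  moreover have "card (NT ?z) = 1" using nb by (simp add: NT_def)
  ultimately have "?z \<in> L" by (simp add: L_def')
  then show ?thesis using zs by (intro exI[of _ "[v,y] @ zs"]) auto
qed

definition harm :: "('v \<Rightarrow> real) \<Rightarrow> bool" where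
  "harm g \<longleftrightarrow> (\<forall>x\<in>N. \<exists>p. (\<forall>u\<in>NT x. p u > 0) \<and> sum p (NT x) = 1 \<and> g x = (\<Sum>u\<in>NT x. p u * g u))"

lemma propagate:
  assumes h: "harm g" and M: "\<forall>x\<in>VT. g x \<le> M" and x: "x \<in> N" "g x = M" and u: "u \<in> NT x"
  shows "g u = M"
proof -
  obtain p where p: "\<forall>u\<in>NT x. p u > 0" "sum p (NT x) = 1" "g x = (\<Sum>u\<in>NT x. p u * g u)"
    using h x unfolding harm_def by blast
  have sub: "NT x \<subseteq> VT" using node_props(3)[OF x(1)] .
  have "(\<Sum>u\<in>NT x. p u * (M - g u)) = M * sum p (NT x) - (\<Sum>u\<in>NT x. p u * g u)"
    by (simp add: algebra_simps sum_subtractf sum_distrib_left)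
  also have "\<dots> = 0" using p x by simp
  finally have s0: "(\<Sum>u\<in>NT x. p u * (M - g u)) = 0" .
  have nn: "\<forall>u\<in>NT x. p u * (M - g u) \<ge> 0"
  proof
    fix u assume "u \<in> NT x"
    then have "p u > 0" "g u \<le> M" using p M sub by auto
    then show "p u * (M - g u) \<ge> 0" by simp
  qed
  have "p u * (M - g u) = 0" using sum_nonneg_eq_0_iff[of "NT x" "\<lambda>u. p u * (M - g u)"] s0 nn u by auto
  then show ?thesis using p u by auto
qed

lemma mp_path_aux:
  assumes h: "harm g" and M: "\<forall>x\<in>VT. g x \<le> M"
  shows "is_path ET xs \<Longrightarrow> hd xs \<in> N \<Longrightarrow> g (hd xs) = M \<Longrightarrow> (\<forall>y\<in>set xs. y \<noteq> last xs \<longrightarrow> y \<in> N) \<Longrightarrow> g (last xs) = M"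
proof (induction xs)
  case Nil then show ?case by (simp add: is_path_def)
next
  case (Cons a xs)
  show ?case
  proof (cases "xs = []")
    case True then show ?thesis using Cons by simp
  next
    case False
    have e: "{a, hd xs} \<in> ET" "is_path ET xs" "a \<notin> set xs" using Cons.prems False by (auto simp: is_path_Cons)
    have gb: "g (hd xs) = M" using propagate[OF h M _ _, of a "hd xs"] Cons.prems e by (simp add: NT_def)
    show ?thesis
    proof (cases "hd xs = last xs")
      case True then show ?thesis using gb False by simp
    next
      case hl: False
      have lx: "last (a # xs) = last xs" using False by simp
      have h4: "\<forall>y\<in>set xs. y \<noteq> last xs \<longrightarrow> y \<in> N" using Cons.prems(4) lx by auto
      have "hd xs \<in> N" using h4 hl False hd_in_set by blast
      then have "g (last xs) = M" using Cons.IH[OF e(2) _ gb h4] by blast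
      then show ?thesis using False by simp
    qed
  qed
qed

lemma mp_path:
  assumes h: "harm g" and M: "\<forall>x\<in>VT. g x \<le> M"
    and p: "is_path ET xs" and hd: "hd xs \<in> N" "g (hd xs) = M"
  shows "g (last xs) = M"
  using mp_path_aux[OF h M p hd] butlast_N[OF p hd(1)] by blast

lemma max_le:
  assumes h: "harm g" and c: "\<forall>z\<in>L. g z \<le> c"
  shows "\<forall>x\<in>VT. g x \<le> c"
proof -
  define M where "M = Max (g ` VT)"
  have fin: "finite (g ` VT)" by simp
  have M: "\<forall>x\<in>VT. g x \<le> M" unfolding M_def using fin by auto
  have "M \<in> g ` VT" unfolding M_def using fin VT_ne by (intro Max_in) auto
  then obtain x0 where x0: "x0 \<in> VT" "g x0 = M" by auto
  have "M \<le> c"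
  proof (cases "x0 \<in> L")
    case True then show ?thesis using c x0 by auto
  next
    case False
    then have "x0 \<in> N" using x0 by (simp add: N_def')
    then obtain xs where xs: "is_path ET xs" "hd xs = x0" "last xs \<in> L" using reach_leaf by blast
    then have "g (last xs) = M" using mp_path[OF h M xs(1)] x0 \<open>x0 \<in> N\<close> by simp
    then show ?thesis using c xs by auto
  qed
  show ?thesis
  proof
    fix x assume "x \<in> VT"
    then have "g x \<le> M" using M by blast
    then show "g x \<le> c" using \<open>M \<le> c\<close> by linarith
  qed
qed

lemma harm_neg: assumes "harm g" shows "harm (\<lambda>x. - g x)"
  unfolding harm_def
proof (intro ballI)
  fix x assume "x \<in> N"
  then obtain p where p: "\<forall>u\<in>NT x. p u > 0" "sum p (NT x) = 1" "g x = (\<Sum>u\<in>NT x. p u * g u)"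
    using assms unfolding harm_def by blast
  show "\<exists>p. (\<forall>u\<in>NT x. p u > 0) \<and> sum p (NT x) = 1 \<and> - g x = (\<Sum>u\<in>NT x. p u * - g u)"
    using p by (intro exI[of _ p]) (simp add: sum_negf)
qed

lemma harm_rho:
  assumes "linear \<phi>"
  shows "harm (\<lambda>x. \<phi> (rho E d x))"
  unfolding harm_def
proof
  fix x assume x: "x \<in> N"
  obtain p where p: "\<forall>u\<in>NB x. p u > 0" "sum p (NB x) = 1" "rho E d x = (\<Sum>u\<in>NB x. p u *\<^sub>R rho E d u)"
    using harmonic[OF node_props(2)[OF x]] by blast
  have "\<phi> (rho E d x) = (\<Sum>u\<in>NB x. p u * \<phi> (rho E d u))"
    using p(3) by (simp add: linear_sum[OF assms] linear_scale[OF assms])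
  moreover have nbx: "NB x = NT x" using node_props(1)[OF x] .
  ultimately show "\<exists>p. (\<forall>u\<in>NT x. p u > 0) \<and> sum p (NT x) = 1 \<and> \<phi> (rho E d x) = (\<Sum>u\<in>NT x. p u * \<phi> (rho E d u))"
    using p unfolding nbx by blast
qed

lemma rho_span:
  assumes v: "v \<in> N"
  shows "rho E d v \<in> span (rho E d ` L)"
proof -
  obtain y z where yz: "y \<in> span (rho E d ` L)" "\<And>w. w \<in> span (rho E d ` L) \<Longrightarrow> orthogonal z w"
    "rho E d v = y + z"
    using orthogonal_subspace_decomp_exists[of "rho E d ` L" "rho E d v"] by blast
  have lin: "linear (\<lambda>x. inner z x)" by (rule bounded_linear.linear[OF bounded_linear_inner_right])
  have h: "harm (\<lambda>x. inner z (rho E d x))" using harm_rho[OF lin] .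
  have "\<forall>u\<in>L. inner z (rho E d u) \<le> 0"
  proof
    fix u assume "u \<in> L"
    then have "rho E d u \<in> span (rho E d ` L)" by (intro span_base imageI)
    then have "orthogonal z (rho E d u)" by (rule yz(2))
    then show "inner z (rho E d u) \<le> 0" by (simp add: orthogonal_def)
  qed
  then have le: "\<forall>x\<in>VT. inner z (rho E d x) \<le> 0" using max_le[OF h] by blast
  have "inner z (rho E d v) = inner z y + inner z z" using yz(3) by (simp add: inner_add_right)
  also have "inner z y = 0" using yz(1,2) by (simp add: orthogonal_def)
  finally have "inner z z \<le> 0" using le v by (auto simp: N_def')
  then have "inner z z = 0" using inner_ge_zero[of z] by linarith
  then have "z = 0" by simp
  then show ?thesis using yz by simp
qed

end


lemma linear_nth: "linear (\<lambda>z::real^'n. z $ k)"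
  by (intro linearI) simp_all

lemma indep_coord:
  fixes f :: "'a \<Rightarrow> real ^ 'n"
  assumes nz: "\<forall>u\<in>A. f u $ c u \<noteq> 0" and z: "\<forall>u\<in>A. \<forall>u'\<in>A. u' \<noteq> u \<longrightarrow> f u' $ c u = 0"
  shows "inj_on f A \<and> independent (f ` A)"
proof
  show inj: "inj_on f A"
  proof (rule inj_onI)
    fix u u' assume u: "u \<in> A" "u' \<in> A" "f u = f u'"
    show "u = u'"
    proof (rule ccontr)
      assume "u \<noteq> u'"
      then have "f u' $ c u = 0" using z u by auto
      then show False using nz u by auto
    qed
  qed
  show "independent (f ` A)"
  proof
    assume "dependent (f ` A)"
    then obtain a where a: "a \<in> f ` A" "a \<in> span (f ` A - {a})" unfolding dependent_def by blast
    then obtain u where u: "u \<in> A" "a = f u" by blast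
    have "\<forall>x\<in>f ` A - {a}. x $ c u = 0"
    proof
      fix x assume "x \<in> f ` A - {a}"
      then obtain u' where "u' \<in> A" "x = f u'" "f u' \<noteq> f u" using u by auto
      then show "x $ c u = 0" using z u by auto
    qed
    then have "a $ c u = 0" using linear_eq_0_on_span[OF linear_nth] a(2) by blast
    then show False using nz u by auto
  qed
qed

lemma det2:
  fixes x y :: "real ^ 'n"
  assumes "x $ i * y $ j \<noteq> x $ j * y $ i"
  shows "x \<noteq> y \<and> independent {x, y}"
proof
  show xy: "x \<noteq> y" using assms by (auto simp: mult.commute)
  have y0: "y \<noteq> 0" using assms by auto
  have "x \<notin> span {y}"
  proof
    assume "x \<in> span {y}"
    then obtain c where "x = c *\<^sub>R y" by (auto simp: span_singleton)
    then show False using assms by (simp add: algebra_simps)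
  qed
  then show "independent {x, y}" using xy y0 by (simp add: independent_insert)
qed

context sde
begin

lemma pair_det_node:
  assumes v: "is_node E v" and u: "u \<in> NB v"
  shows "\<exists>i j. wvec E d v $ i * wvec E d u $ j \<noteq> wvec E d v $ j * wvec E d u $ i"
proof -
  obtain \<beta> \<gamma> where bg: "\<beta> > 0" "wvec E d u = \<beta> *\<^sub>R Sv v u + \<gamma> *\<^sub>R wvec E d v"
    using local_rel[OF v u] by blast
  have "card (NB v) \<noteq> 1" "card (NB v) \<noteq> 2" using v sd by (auto simp: node_iff is_leaf_def valency_NB splice_diagram_def)
  then have "NB v \<noteq> {u}" by auto
  then obtain u2 where u2: "u2 \<in> NB v" "u2 \<noteq> u" using u by blast
  obtain i1 where i1: "Sv v u $ i1 > 0" using Sv_pos[OF v u] by blast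
  obtain i2 where i2: "Sv v u2 $ i2 > 0" using Sv_pos[OF v u2(1)] by blast
  have l1: "is_leaf E i1" "nxt v i1 = u" using i1 by (auto simp: Sv_nth split: if_splits)
  have l2: "is_leaf E i2" "nxt v i2 = u2" using i2 by (auto simp: Sv_nth split: if_splits)
  have vl: "\<not> is_leaf E v" using v by (simp add: node_iff)
  have w1: "wvec E d v $ i1 = Sv v u $ i1" using l1 vl by (simp add: wvec_nth Sv_nth)
  have w2: "wvec E d v $ i2 = Sv v u2 $ i2" using l2 vl by (simp add: wvec_nth Sv_nth)
  have s12: "Sv v u $ i2 = 0" using l2 u2 by (simp add: Sv_nth)
  let ?s1 = "Sv v u $ i1" and ?s2 = "Sv v u2 $ i2"
  have "wvec E d v $ i1 * wvec E d u $ i2 - wvec E d v $ i2 * wvec E d u $ i1 = - \<beta> * ?s1 * ?s2"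
    using w1 w2 s12 by (simp add: bg(2) algebra_simps)
  moreover have "\<beta> * ?s1 * ?s2 > 0" using bg i1 i2 by simp
  ultimately show ?thesis by (intro exI[of _ i1] exI[of _ i2]) auto
qed

lemma pair_det:
  assumes e: "{a,b} \<in> E"
  shows "\<exists>i j. rho E d a $ i * rho E d b $ j \<noteq> rho E d a $ j * rho E d b $ i"
proof -
  have "\<exists>i j. wvec E d a $ i * wvec E d b $ j \<noteq> wvec E d a $ j * wvec E d b $ i"
  proof (cases "is_node E a")
    case True
    then show ?thesis using pair_det_node[of a b] e by (simp add: NB_def)
  next
    case an: False
    show ?thesis
    proof (cases "is_node E b")
      case True
      then obtain i j where "wvec E d b $ i * wvec E d a $ j \<noteq> wvec E d b $ j * wvec E d a $ i"
        using pair_det_node[of b a] e by (auto simp: NB_def insert_commute)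
      then show ?thesis by (intro exI[of _ j] exI[of _ i]) (simp add: mult.commute)
    next
      case False
      have "a \<noteq> b" using e edge_neq by blast
      then show ?thesis using an False
        by (intro exI[of _ a] exI[of _ b]) (simp add: wvec_nth node_iff)
    qed
  qed
  then obtain i j where ij: "wvec E d a $ i * wvec E d b $ j \<noteq> wvec E d a $ j * wvec E d b $ i" by blast
  have na: "norm1 (wvec E d a) > 0" and nb: "norm1 (wvec E d b) > 0" using norm1_pos by auto
  have "rho E d a $ i * rho E d b $ j \<noteq> rho E d a $ j * rho E d b $ i"
  proof
    assume "rho E d a $ i * rho E d b $ j = rho E d a $ j * rho E d b $ i"
    then have "(wvec E d a $ i * wvec E d b $ j) / (norm1 (wvec E d a) * norm1 (wvec E d b))
        = (wvec E d a $ j * wvec E d b $ i) / (norm1 (wvec E d a) * norm1 (wvec E d b))"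
      by (simp add: rho_def)
    then have "wvec E d a $ i * wvec E d b $ j = wvec E d a $ j * wvec E d b $ i"
      using na nb by (simp add: divide_cancel_right)
    then show False using ij by simp
  qed
  then show ?thesis by blast
qed

end

context st
begin

definition vT :: "'v \<Rightarrow> 'v" where "vT u = (SOME v. {u,v} \<in> ET)"

lemma vT_props:
  assumes Nne: "N \<noteq> {}" and u: "u \<in> L"
  shows "{u, vT u} \<in> ET" "vT u \<in> N" "NT u = {vT u}"
proof -
  obtain v0 where v0: "v0 \<in> N" using Nne by blast
  have uV: "u \<in> VT" "v0 \<in> VT" using u v0 L_VT by (auto simp: N_def')
  obtain xs where xs: "is_path ET xs" "hd xs = u" "last xs = v0" using pathT[OF uV] by blast
  have "u \<noteq> v0" using u v0 LN by blast
  then obtain y ys where xy: "xs = u # y # ys" using xs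
    by (cases xs; cases "tl xs") (auto simp: is_path_def)
  have uy: "{u,y} \<in> ET" using xs(1) xy by (simp add: is_path_Cons2)
  have "card (NT u) \<le> 1" using u by (simp add: L_def')
  moreover have "y \<in> NT u" using uy by (simp add: NT_def)
  moreover have "finite (NT u)" by simp
  ultimately have all: "\<forall>a\<in>NT u. \<forall>b\<in>NT u. a = b" using card_le_Suc0_iff_eq[of "NT u"] by auto
  then have nt: "NT u = {y}" using \<open>y \<in> NT u\<close> by blast
  have "{u,v} \<in> ET \<longleftrightarrow> v = y" for v using nt by (auto simp: NT_def)
  then have vy: "vT u = y" unfolding vT_def by simp
  show "{u, vT u} \<in> ET" using uy vy by simp
  show "NT u = {vT u}" using nt vy by simp
  have rp: "is_path ET (rev xs)" using xs(1) by (simp add: is_path_rev)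
  have "y \<noteq> u" using uy ET_sub edge_neq by (metis insert_commute subsetD)
  moreover have "hd (rev xs) \<in> N" using xs v0 by (simp add: hd_rev)
  moreover have "y \<in> set (rev xs)" using xy by simp
  moreover have "last (rev xs) = u" using xs xy by (simp add: last_rev)
  ultimately show "vT u \<in> N" using butlast_N[OF rp] vy by auto
qed

lemma geo_via:
  assumes Nne: "N \<noteq> {}" and u: "u \<in> L" and u': "u' \<in> L" and ne: "u \<noteq> u'"
  shows "vT u \<in> set (geodesic E u u')"
proof -
  have vu: "{u, vT u} \<in> ET" "vT u \<in> N" using vT_props[OF Nne u] by auto
  have vu': "{u', vT u'} \<in> ET" "vT u' \<in> N" using vT_props[OF Nne u'] by auto
  have V: "vT u \<in> VT" "vT u' \<in> VT" using vu vu' by (auto simp: N_def')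
  obtain q where q: "is_path ET q" "hd q = vT u" "last q = vT u'" using pathT[OF V] by blast
  have qN: "set q \<subseteq> N"
  proof
    fix y assume y: "y \<in> set q"
    show "y \<in> N"
    proof (cases "y = last q")
      case True then show ?thesis using q vu' by simp
    next
      case False then show ?thesis using butlast_N[OF q(1)] q vu y by simp
    qed
  qed
  have nq: "u \<notin> set q" "u' \<notin> set q" using qN u u' LN by blast+
  have qne: "q \<noteq> []" using q(1) is_path_nonempty by blast
  have p1: "is_path ET (u # q)" using q vu nq qne by (simp add: is_path_Cons)
  have p2: "is_path ET ((u # q) @ [u'])"
    using p1 q vu' nq ne qne by (subst is_path_append) (auto simp: insert_commute)
  have "geodesic E u u' = (u # q) @ [u']" using pathT_E[OF p2] by (intro geo_eq) auto
  then show ?thesis using q hd_in_set[OF qne] by auto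
qed

lemma disjoint_branch:
  assumes Nne: "N \<noteq> {}" and u: "u \<in> L" and u': "u' \<in> L" and ne: "u \<noteq> u'"
    and i: "is_leaf E i" and n1: "nxt (vT u) i = u" and n2: "nxt (vT u') i = u'"
  shows False
proof -
  have vu: "{u, vT u} \<in> ET" "vT u \<in> N" using vT_props[OF Nne u] by auto
  have vu': "{u', vT u'} \<in> ET" "vT u' \<in> N" using vT_props[OF Nne u'] by auto
  have eu: "{u, vT u} \<in> E" and eu': "{u', vT u'} \<in> E" using vu vu' ET_sub by auto
  have iv: "vT u \<noteq> i" "vT u' \<noteq> i" using i node_props(2) vu(2) vu'(2) by (auto simp: node_iff)
  have iS: "i \<in> Su (vT u) u" using geo_split(3)[OF iv(1)] n1 by (simp add: Su_def)
  have iS': "i \<in> Su (vT u') u'" using geo_split(3)[OF iv(2)] n2 by (simp add: Su_def)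
  have s1: "u' \<notin> Su (vT u) u" using geo_via[OF Nne u u' ne] by (simp add: Su_def)
  have s2: "u \<notin> Su (vT u') u'" using geo_via[OF Nne u' u] ne by (simp add: Su_def)
  let ?p = "geodesic E u' i"
  have vp: "vT u' \<notin> set ?p" using iS' by (simp add: Su_def)
  show False
  proof (cases "u \<in> set ?p")
    case True
    then obtain A B where sp: "?p = A @ u # B" by (meson split_list)
    have pp: "is_path E (A @ [u])"
    proof (cases "B = []")
      case True then show ?thesis using sp geo_path[of u' i] by simp
    next
      case False
      have "is_path E ((A @ [u]) @ B)" using sp geo_path[of u' i] by simp
      then show ?thesis using False by (subst (asm) is_path_append) auto
    qed
    have h: "hd (A @ [u]) = u'" using sp geo_hd[of u' i] by (cases A) auto
    have "vT u' \<notin> set (A @ [u])" using vp sp by auto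
    then have "last (A @ [u]) \<in> Su (vT u') u'"
      using side_walk[OF eu' pp] Su_self[OF eu'] h by simp
    then show False using s2 by simp
  next
    case False
    have rp: "is_path E (rev ?p)" using geo_path by (simp add: is_path_rev)
    have "hd (rev ?p) = i" using geo_last[of u' i] geo_ne by (simp add: hd_rev)
    then have "last (rev ?p) \<in> Su (vT u) u" using side_walk[OF eu rp] iS False by simp
    then have "u' \<in> Su (vT u) u" using geo_hd[of u' i] geo_ne by (simp add: last_rev)
    then show False using s1 by simp
  qed
qed

end


context st
begin

lemma indep_main:
  assumes Nne: "N \<noteq> {}"
  shows "inj_on (rho E d) L \<and> independent (rho E d ` L)"
proof -
  define Sx where "Sx u = Sv (vT u) u" for u
  have vn: "is_node E (vT u)" "u \<in> NB (vT u)" if "u \<in> L" for u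
  proof -
    have e: "{u, vT u} \<in> ET" and n: "vT u \<in> N" using vT_props[OF Nne that] by auto
    show "is_node E (vT u)" using node_props(2)[OF n] .
    have "{vT u, u} \<in> E" using e ET_sub by (auto simp: insert_commute)
    then show "u \<in> NB (vT u)" by (simp add: NB_def)
  qed
  have "\<forall>u\<in>L. \<exists>i. Sx u $ i > 0"
  proof
    fix u assume "u \<in> L"
    show "\<exists>i. Sx u $ i > 0" using Sv_pos[OF vn[OF \<open>u \<in> L\<close>]] unfolding Sx_def by blast
  qed
  from bchoice[OF this] obtain c where c0: "\<forall>u\<in>L. Sx u $ c u > 0" by blast
  then have c: "\<And>u. u \<in> L \<Longrightarrow> Sx u $ c u > 0" by blast
  have z: "\<forall>u\<in>L. \<forall>u'\<in>L. u' \<noteq> u \<longrightarrow> Sx u' $ c u = 0"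
  proof (intro ballI impI)
    fix u u' assume uu: "u \<in> L" "u' \<in> L" "u' \<noteq> u"
    show "Sx u' $ c u = 0"
    proof (rule ccontr)
      assume "Sx u' $ c u \<noteq> 0"
      then have a: "is_leaf E (c u)" "nxt (vT u') (c u) = u'" by (auto simp: Sx_def Sv_nth split: if_splits)
      have "nxt (vT u) (c u) = u" using c[OF uu(1)] by (auto simp: Sx_def Sv_nth split: if_splits)
      then show False using disjoint_branch[OF Nne uu(1) uu(2) _ a(1)] a(2) uu(3) by auto
    qed
  qed
  have nz: "\<forall>u\<in>L. Sx u $ c u \<noteq> 0"
  proof
    fix u assume "u \<in> L"
    then have "Sx u $ c u > 0" by (rule c)
    then show "Sx u $ c u \<noteq> 0" by simp
  qed
  have ic: "inj_on Sx L \<and> independent (Sx ` L)" using indep_coord[OF nz z] .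
  have sp: "Sx ` L \<subseteq> span (rho E d ` L)"
  proof
    fix s assume "s \<in> Sx ` L"
    then obtain u where u: "u \<in> L" "s = Sx u" by blast
    have "rho E d u \<in> span (rho E d ` L)" using u by (intro span_base imageI)
    moreover have "rho E d (vT u) \<in> span (rho E d ` L)" using rho_span[OF vT_props(2)[OF Nne u(1)]] .
    ultimately have "{rho E d u, rho E d (vT u)} \<subseteq> span (rho E d ` L)" by blast
    then have "span {rho E d u, rho E d (vT u)} \<subseteq> span (span (rho E d ` L))"
      by (rule span_mono)
    then have "span {rho E d u, rho E d (vT u)} \<subseteq> span (rho E d ` L)"
      by (simp only: span_span)
    moreover have "Sx u \<in> span {rho E d u, rho E d (vT u)}" unfolding Sx_def by (rule Sv_span[OF vn[OF u(1)]])
    ultimately show "s \<in> span (rho E d ` L)" using u by blast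
  qed
  have cS: "card (Sx ` L) = card L" using ic by (simp add: card_image)
  have le1: "card L \<le> card (rho E d ` L)"
    using independent_span_bound[of "rho E d ` L" "Sx ` L"] ic sp cS by simp
  have le2: "card (rho E d ` L) \<le> card L" by (rule card_image_le) simp
  have inj: "inj_on (rho E d) L" using le1 le2 by (simp add: inj_on_iff_eq_card)
  have ind: "independent (rho E d ` L)"
  proof
    assume "dependent (rho E d ` L)"
    then obtain a where a: "a \<in> rho E d ` L" "a \<in> span (rho E d ` L - {a})" unfolding dependent_def by blast
    have "span (rho E d ` L - {a}) = span (insert a (rho E d ` L - {a}))" using span_redundant[OF a(2)] by simp
    also have "insert a (rho E d ` L - {a}) = rho E d ` L" using a(1) by blast
    finally have "Sx ` L \<subseteq> span (rho E d ` L - {a})" using sp by simp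
    then have "card (Sx ` L) \<le> card (rho E d ` L - {a})"
      using independent_span_bound[of "rho E d ` L - {a}" "Sx ` L"] ic by simp
    also have "\<dots> = card (rho E d ` L) - 1" using a(1) by (simp add: card_Diff_singleton)
    finally have f: "card (Sx ` L) \<le> card (rho E d ` L) - 1" .
    have "card L > 0" using a(1) by (auto simp: card_gt_0_iff)
    then show False using f cS le2 by linarith
  qed
  show ?thesis using inj ind by blast
qed

lemma pos_main:
  assumes inj: "inj_on (rho E d) L" and ind: "independent (rho E d ` L)" and v: "v \<in> N"
  shows "\<exists>c. (\<forall>x\<in>rho E d ` L. 0 < c x) \<and> sum c (rho E d ` L) = 1 \<and> (\<Sum>x\<in>rho E d ` L. c x *\<^sub>R x) = rho E d v"
proof -
  have fin: "finite (rho E d ` L)" by simp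
  have "rho E d v \<in> range (\<lambda>c. \<Sum>x\<in>rho E d ` L. c x *\<^sub>R x)"
    using rho_span[OF v] unfolding span_finite[OF fin] .
  then obtain c where c: "rho E d v = (\<Sum>x\<in>rho E d ` L. c x *\<^sub>R x)" by blast
  have pos: "c x > 0" if x: "x \<in> rho E d ` L" for x
  proof -
    obtain u0 where u0: "u0 \<in> L" "x = rho E d u0" using x by blast
    obtain g :: "real ^ 'v \<Rightarrow> real" where g: "linear g" "\<forall>y\<in>rho E d ` L. g y = (if y = rho E d u0 then 1 else 0)"
      using linear_independent_extend[OF ind, where f="\<lambda>y. if y = rho E d u0 then (1::real) else 0"] by blast
    have gL: "g (rho E d u) = (if u = u0 then 1 else 0)" if "u \<in> L" for u
    proof -
      have "g (rho E d u) = (if rho E d u = rho E d u0 then 1 else 0)" using g(2) that by blast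
      moreover have "rho E d u = rho E d u0 \<longleftrightarrow> u = u0" using inj that u0(1) by (auto dest: inj_onD)
      ultimately show ?thesis by simp
    qed
    have gv: "g (rho E d v) = c x"
    proof -
      have "g (rho E d v) = (\<Sum>y\<in>rho E d ` L. c y * g y)"
        using c by (simp add: linear_sum[OF g(1)] linear_scale[OF g(1)])
      also have "\<dots> = (\<Sum>y\<in>rho E d ` L. (if y = x then c y else 0))"
      proof (rule sum.cong[OF refl])
        fix y assume "y \<in> rho E d ` L"
        then have "g y = (if y = rho E d u0 then 1 else 0)" using g(2) by blast
        then show "c y * g y = (if y = x then c y else 0)" using u0(2) by simp
      qed
      also have "\<dots> = c x" using x by (simp add: sum.delta)
      finally show ?thesis .
    qed
    have h: "harm (\<lambda>y. - g (rho E d y))" using harm_neg[OF harm_rho[OF g(1)]] .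
    have "\<forall>z\<in>L. - g (rho E d z) \<le> 0" using gL by auto
    then have le: "\<forall>y\<in>VT. - g (rho E d y) \<le> 0" using max_le[OF h] by blast
    show ?thesis
    proof (rule ccontr)
      assume "\<not> c x > 0"
      moreover have "- g (rho E d v) \<le> 0" using le v by (simp add: N_def')
      ultimately have gv0: "- g (rho E d v) = 0" using gv by linarith
      have VV: "v \<in> VT" "u0 \<in> VT" using v u0 L_VT by (auto simp: N_def')
      obtain xs where xs: "is_path ET xs" "hd xs = v" "last xs = u0" using pathT[OF VV] by blast
      have hn: "hd xs \<in> N" using xs(2) v by simp
      have hg: "- g (rho E d (hd xs)) = 0" using xs(2) gv0 by simp
      have "- g (rho E d (last xs)) = 0" using mp_path[OF h le xs(1) hn] hg by blast
      then have "g (rho E d u0) = 0" using xs(3) by simp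
      then show False using gL[OF u0(1)] by simp
    qed
  qed
  have "1 = vsum (rho E d v)" by (simp add: vsum_rho)
  also have "\<dots> = (\<Sum>x\<in>rho E d ` L. c x * vsum x)" by (subst c) (simp add: vsum_sum vsum_scale)
  also have "\<dots> = sum c (rho E d ` L)"
  proof (rule sum.cong[OF refl])
    fix y assume "y \<in> rho E d ` L"
    then obtain u where "y = rho E d u" by blast
    then show "c y * vsum y = c y" by (simp add: vsum_rho)
  qed
  finally have s1: "sum c (rho E d ` L) = 1" by simp
  have pa: "\<forall>x\<in>rho E d ` L. 0 < c x" using pos by blast
  show ?thesis by (intro exI[of _ c] conjI pa s1 c[symmetric])
qed

lemma adj_small:
  assumes N0: "N = {}" and ab: "a \<in> VT" "b \<in> VT" "a \<noteq> b"
  shows "{a,b} \<in> ET"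
proof -
  obtain xs where xs: "is_path ET xs" "hd xs = a" "last xs = b" using pathT[OF ab(1,2)] by blast
  obtain y ys where xy: "xs = a # y # ys" using xs ab(3)
    by (cases xs; cases "tl xs") (auto simp: is_path_def)
  have "ys = []"
  proof (rule ccontr)
    assume "ys \<noteq> []"
    then have "y \<in> N" using interior_N[of "[a]" y ys] xs xy by simp
    then show False using N0 by simp
  qed
  then show ?thesis using xs xy by (simp add: is_path_Cons2)
qed

lemma indep_small:
  assumes N0: "N = {}"
  shows "inj_on (rho E d) L \<and> independent (rho E d ` L)"
proof -
  have LV: "L = VT" using N0 L_VT by (auto simp: N_def')
  obtain a where a: "a \<in> VT" using VT_ne by blast
  show ?thesis
  proof (cases "VT = {a}")
    case True
    then show ?thesis using LV rho_ne0[of a] by (simp add: independent_insert)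
  next
    case False
    then obtain b where b: "b \<in> VT" "b \<noteq> a" using a by blast
    have ab: "{a,b} \<in> ET" using adj_small[OF N0 a b(1)] b(2) by simp
    have VT2: "VT = {a,b}"
    proof (rule ccontr)
      assume "VT \<noteq> {a,b}"
      then obtain c where c: "c \<in> VT" "c \<noteq> a" "c \<noteq> b" using a b by blast
      have ac: "{a,c} \<in> ET" using adj_small[OF N0 a c(1)] c(2) by simp
      have "{b,c} \<subseteq> NT a" using ab ac by (simp add: NT_def)
      then have "card {b,c} \<le> card (NT a)" by (intro card_mono) auto
      then have "card (NT a) \<ge> 2" using c by simp
      then have "a \<in> N" using a by (auto simp: N_def' L_def')
      then show False using N0 by simp
    qed
    have abE: "{a,b} \<in> E" using ab ET_sub by blast
    from pair_det[OF abE] obtain i j where ij: "rho E d a $ i * rho E d b $ j \<noteq> rho E d a $ j * rho E d b $ i"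
      by blast
    have "rho E d a \<noteq> rho E d b \<and> independent {rho E d a, rho E d b}" using det2[OF ij] .
    then have "rho E d a \<noteq> rho E d b" "independent {rho E d a, rho E d b}" by auto
    moreover have "rho E d ` L = {rho E d a, rho E d b}" using LV VT2 by simp
    moreover have "inj_on (rho E d) L" using LV VT2 \<open>rho E d a \<noteq> rho E d b\<close> by (auto simp: inj_on_def)
    ultimately show ?thesis by simp
  qed
qed

end

theorem proposition5p10:
  fixes E :: "('v::finite) set set" and d :: "'v \<Rightarrow> 'v \<Rightarrow> nat"
    and VT :: "'v set" and ET :: "'v set set"
  assumes "splice_diagram E d"
    and "edge_determinant_condition E d"
    and "subtree E VT ET"
    and "star_full E VT ET"
  shows "(inj_on (rho E d) (sub_leaves VT ET)
         \<and> independent (rho E d ` sub_leaves VT ET))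
         \<and> ((int (card (sub_leaves VT ET)) - 1) simplex
           (convex hull (rho E d ` sub_leaves VT ET)))
         \<and> (\<forall>v\<in>sub_nodes VT ET.
           rho E d v \<in> rel_interior (convex hull (rho E d ` sub_leaves VT ET)))"
proof -
  interpret st E d VT ET
    using assms by unfold_locales (auto simp: splice_diagram_def)
  have ind: "inj_on (rho E d) (sub_leaves VT ET) \<and> independent (rho E d ` sub_leaves VT ET)"
    using indep_main indep_small by blast
  have na: "\<not> affine_dependent (rho E d ` sub_leaves VT ET)"
    using ind affine_dependent_imp_dependent by blast
  have cc: "card (rho E d ` sub_leaves VT ET) = card (sub_leaves VT ET)"
    using ind by (simp add: card_image)
  have sx: "(int (card (sub_leaves VT ET)) - 1) simplex (convex hull (rho E d ` sub_leaves VT ET))"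
    unfolding simplex_def using na cc by (intro exI[of _ "rho E d ` sub_leaves VT ET"]) simp
  have ri: "\<forall>v\<in>sub_nodes VT ET. rho E d v \<in> rel_interior (convex hull (rho E d ` sub_leaves VT ET))"
  proof
    fix v assume v: "v \<in> sub_nodes VT ET"
    show "rho E d v \<in> rel_interior (convex hull (rho E d ` sub_leaves VT ET))"
      unfolding rel_interior_convex_hull_explicit[OF na] using pos_main[OF conjunct1[OF ind] conjunct2[OF ind] v] by simp
  qed
  show ?thesis using ind sx ri by blast
qed


end
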